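(* For every integer $k\ge3$, there are infinitely many pairwise non-isomorphic connected $k$-regular highly-regular graphs which are not distance-regular.
   Context: A graph $\Gamma$ of order $n$ is highly-regular with collapsed adjacency matrix $C=[c_{i,j}]_{1\le i,j\le m}$, where $2\le m<n$ (the value $m=n$ allowed only when $n=2$), if for every vertex $u$ there is a partition of $V(\Gamma)$ into nonempty sets $V_1(u)=\{u\},\dots,V_m(u)$ such that every $y\in V_j(u)$ is adjacent to exactly $c_{i,j}$ vertices of $V_i(u)$. A connected graph is distance-regular if for all $u,v$ the numbers $|D_1(v)\cap D_{i-1}(u)|$, $|D_1(v)\cap D_i(u)|$, $|D_1(v)\cap D_{i+1}(u)|$ depend only on $i=d(u,v)$, where $D_i(u)=\{v:d(u,v)=i\}$. *)

theory Defs
  imports Main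
begin

type_synonym graph = "nat set \<times> (nat \<Rightarrow> nat \<Rightarrow> bool)"

definition simple_graph :: "graph \<Rightarrow> bool" where
  "simple_graph G \<longleftrightarrow> (case G of (V, E) \<Rightarrow>
     finite V \<and> V \<noteq> {} \<and>
     (\<forall>x y. E x y \<longrightarrow> x \<in> V \<and> y \<in> V) \<and>
     (\<forall>x y. E x y \<longrightarrow> E y x) \<and> (\<forall>x. \<not> E x x))"

definition nbhd :: "graph \<Rightarrow> nat \<Rightarrow> nat set" where
  "nbhd G v = {u \<in> fst G. snd G v u}"

definition k_regular :: "nat \<Rightarrow> graph \<Rightarrow> bool" where
  "k_regular k G \<longleftrightarrow> (\<forall>v \<in> fst G. card (nbhd G v) = k)"

definition graph_connected :: "graph \<Rightarrow> bool" where
  "graph_connected G \<longleftrightarrow> (\<forall>u \<in> fst G. \<forall>v \<in> fst G. (snd G)\<^sup>*\<^sup>* u v)"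

definition gdist :: "graph \<Rightarrow> nat \<Rightarrow> nat \<Rightarrow> nat" where
  "gdist G u v = (LEAST n. (snd G ^^ n) u v)"

definition Dset :: "graph \<Rightarrow> nat \<Rightarrow> nat \<Rightarrow> nat set" where
  "Dset G i u = {v \<in> fst G. gdist G u v = i}"

text \<open>D_{-1}(u) is empty; we index the three counts explicitly.\<close>
definition Dprev :: "graph \<Rightarrow> nat \<Rightarrow> nat \<Rightarrow> nat set" where
  "Dprev G i u = (if i = 0 then {} else Dset G (i - 1) u)"

definition distance_regular :: "graph \<Rightarrow> bool" where
  "distance_regular G \<longleftrightarrow> graph_connected G \<and>
     (\<forall>u \<in> fst G. \<forall>v \<in> fst G. \<forall>w \<in> fst G. \<forall>x \<in> fst G.
        gdist G u v = gdist G w x \<longrightarrow>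
          (let i = gdist G u v in
           card (nbhd G v \<inter> Dprev G i u) = card (nbhd G x \<inter> Dprev G i w) \<and>
           card (nbhd G v \<inter> Dset G i u) = card (nbhd G x \<inter> Dset G i w) \<and>
           card (nbhd G v \<inter> Dset G (i + 1) u) = card (nbhd G x \<inter> Dset G (i + 1) w)))"

text \<open>Highly-regular with collapsed adjacency matrix C (indices 1..m):
  for every vertex u there is a partition V_1(u)={u}, ..., V_m(u) of V into nonempty
  sets such that each y in V_j(u) has exactly C i j neighbours in V_i(u).\<close>
definition highly_regular_with :: "graph \<Rightarrow> nat \<Rightarrow> (nat \<Rightarrow> nat \<Rightarrow> nat) \<Rightarrow> bool" where
  "highly_regular_with G m C \<longleftrightarrow>
     2 \<le> m \<and> (m < card (fst G) \<or> (m = card (fst G) \<and> card (fst G) = 2)) \<and>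
     (\<forall>u \<in> fst G. \<exists>P :: nat \<Rightarrow> nat set.
        P 1 = {u} \<and>
        (\<forall>i \<in> {1..m}. P i \<noteq> {}) \<and>
        (\<forall>i \<in> {1..m}. \<forall>j \<in> {1..m}. i \<noteq> j \<longrightarrow> P i \<inter> P j = {}) \<and>
        (\<Union>i \<in> {1..m}. P i) = fst G \<and>
        (\<forall>i \<in> {1..m}. \<forall>j \<in> {1..m}. \<forall>y \<in> P j. card (nbhd G y \<inter> P i) = C i j))"

definition highly_regular :: "graph \<Rightarrow> bool" where
  "highly_regular G \<longleftrightarrow> (\<exists>m C. highly_regular_with G m C)"

definition graph_iso :: "graph \<Rightarrow> graph \<Rightarrow> bool" where
  "graph_iso G H \<longleftrightarrow> (\<exists>f. bij_betw f (fst G) (fst H) \<and>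
     (\<forall>x \<in> fst G. \<forall>y \<in> fst G. snd G x y \<longleftrightarrow> snd H (f x) (f y)))"

end

theory Submission
  imports Defs "HOL-Number_Theory.Cong"
begin



definition aut :: "graph \<Rightarrow> (nat \<Rightarrow> nat) \<Rightarrow> bool" where
  "aut G h \<longleftrightarrow> bij_betw h (fst G) (fst G) \<and>
     (\<forall>x\<in>fst G. \<forall>y\<in>fst G. snd G x y \<longleftrightarrow> snd G (h x) (h y))"

lemma aut_nbhd:
  assumes sg: "simple_graph G" and a: "aut G h" and y: "y \<in> fst G"
  shows "h ` nbhd G y = nbhd G (h y)"
proof -
  obtain V E where G: "G = (V, E)" by (cases G)
  have sup: "\<And>x y. E x y \<Longrightarrow> x \<in> V \<and> y \<in> V" using sg G by (auto simp: simple_graph_def)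
  have bij: "bij_betw h V V" and pres: "\<And>x y. x \<in> V \<Longrightarrow> y \<in> V \<Longrightarrow> E x y \<longleftrightarrow> E (h x) (h y)"
    using a G by (auto simp: aut_def)
  have yV: "y \<in> V" using y G by simp
  show ?thesis
  proof
    show "h ` nbhd G y \<subseteq> nbhd G (h y)"
      using pres yV bij G by (auto simp: nbhd_def bij_betw_def)
    show "nbhd G (h y) \<subseteq> h ` nbhd G y"
    proof
      fix w assume "w \<in> nbhd G (h y)"
      hence wV: "w \<in> V" and e: "E (h y) w" using G by (auto simp: nbhd_def)
      then obtain z where z: "z \<in> V" "w = h z" using bij by (auto simp: bij_betw_def)
      hence "E y z" using pres[OF yV z(1)] e by simp
      thus "w \<in> h ` nbhd G y" using z G by (auto simp: nbhd_def)
    qed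
  qed
qed

lemma aut_card:
  assumes sg: "simple_graph G" and a: "aut G h" and y: "y \<in> fst G" and P: "P \<subseteq> fst G"
  shows "card (nbhd G (h y) \<inter> h ` P) = card (nbhd G y \<inter> P)"
proof -
  have inj: "inj_on h (fst G)" using a by (auto simp: aut_def bij_betw_def)
  have nb: "nbhd G y \<subseteq> fst G" by (auto simp: nbhd_def)
  have "h ` (nbhd G y \<inter> P) = h ` nbhd G y \<inter> h ` P"
    using inj nb P by (simp add: inj_on_image_Int)
  hence "nbhd G (h y) \<inter> h ` P = h ` (nbhd G y \<inter> P)"
    using aut_nbhd[OF sg a y] by simp
  moreover have "inj_on h (nbhd G y \<inter> P)" using inj nb by (meson inf.coboundedI1 inj_on_subset)
  ultimately show ?thesis by (simp add: card_image)
qed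

lemma hr_aut:
  assumes sg: "simple_graph G" and m2: "2 \<le> m" and mlt: "m < card (fst G)"
    and uz: "uz \<in> fst G" and P1: "P 1 = {uz}"
    and ne: "\<forall>i\<in>{1..m}. P i \<noteq> {}"
    and dj: "\<forall>i\<in>{1..m}. \<forall>j\<in>{1..m}. i \<noteq> j \<longrightarrow> P i \<inter> P j = {}"
    and cov: "(\<Union>i\<in>{1..m}. P i) = fst G"
    and tr: "\<forall>j\<in>{1..m}. \<forall>y\<in>P j. \<forall>y'\<in>P j. \<exists>h. aut G h \<and>
               (\<forall>i\<in>{1..m}. \<forall>v\<in>fst G. h v \<in> P i \<longleftrightarrow> v \<in> P i) \<and> h y = y'"
    and vt: "\<forall>u\<in>fst G. \<exists>\<sigma>. aut G \<sigma> \<and> \<sigma> uz = u"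
  shows "highly_regular G"
proof -
  define C where "C i j = card (nbhd G (SOME y. y \<in> P j) \<inter> P i)" for i j
  have Psub: "\<And>i. i \<in> {1..m} \<Longrightarrow> P i \<subseteq> fst G" using cov by blast
  have base: "card (nbhd G y \<inter> P i) = C i j" if i: "i \<in> {1..m}" and j: "j \<in> {1..m}" and y: "y \<in> P j" for i j y
  proof -
    define r where "r = (SOME y. y \<in> P j)"
    have r: "r \<in> P j" using y unfolding r_def by (rule someI)
    obtain h where h: "aut G h" "\<forall>i\<in>{1..m}. \<forall>v\<in>fst G. h v \<in> P i \<longleftrightarrow> v \<in> P i" "h y = r"
      using tr j y r by blast
    have bij: "bij_betw h (fst G) (fst G)" using h(1) by (simp add: aut_def)
    have img: "h ` P i = P i"
    proof
      show "h ` P i \<subseteq> P i" using h(2) i Psub[OF i] by auto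
      show "P i \<subseteq> h ` P i"
      proof
        fix w assume w: "w \<in> P i"
        hence "w \<in> fst G" using Psub[OF i] by auto
        then obtain z where z: "z \<in> fst G" "w = h z" using bij by (auto simp: bij_betw_def)
        hence "z \<in> P i" using h(2) i w by auto
        thus "w \<in> h ` P i" using z by auto
      qed
    qed
    have yV: "y \<in> fst G" using Psub[OF j] y by auto
    have "card (nbhd G (h y) \<inter> h ` P i) = card (nbhd G y \<inter> P i)"
      by (rule aut_card[OF sg h(1) yV Psub[OF i]])
    thus ?thesis using img h(3) unfolding C_def r_def by simp
  qed
  have "highly_regular_with G m C"
    unfolding highly_regular_with_def
  proof (intro conjI ballI)
    show "2 \<le> m" by (rule m2)
    show "m < card (fst G) \<or> m = card (fst G) \<and> card (fst G) = 2" using mlt by simp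
  next
    fix u assume u: "u \<in> fst G"
    obtain \<sigma> where s: "aut G \<sigma>" "\<sigma> uz = u" using vt u by blast
    have bij: "bij_betw \<sigma> (fst G) (fst G)" using s(1) by (simp add: aut_def)
    have inj: "inj_on \<sigma> (fst G)" using bij by (simp add: bij_betw_def)
    show "\<exists>Q. Q 1 = {u} \<and> (\<forall>i\<in>{1..m}. Q i \<noteq> {}) \<and>
        (\<forall>i\<in>{1..m}. \<forall>j\<in>{1..m}. i \<noteq> j \<longrightarrow> Q i \<inter> Q j = {}) \<and>
        \<Union> (Q ` {1..m}) = fst G \<and>
        (\<forall>i\<in>{1..m}. \<forall>j\<in>{1..m}. \<forall>y\<in>Q j. card (nbhd G y \<inter> Q i) = C i j)"
    proof (intro exI[of _ "\<lambda>i. \<sigma> ` P i"] conjI ballI impI)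
      show "\<sigma> ` P 1 = {u}" using P1 s by simp
    next
      fix i assume "i \<in> {1..m}" thus "\<sigma> ` P i \<noteq> {}" using ne by auto
    next
      fix i j assume i: "i \<in> {1..m}" and j: "j \<in> {1..m}" and ij: "i \<noteq> j"
      have "\<sigma> ` P i \<inter> \<sigma> ` P j = \<sigma> ` (P i \<inter> P j)"
        using inj Psub[OF i] Psub[OF j] by (simp add: inj_on_image_Int)
      thus "\<sigma> ` P i \<inter> \<sigma> ` P j = {}" using dj i j ij by auto
    next
      have "\<Union> ((\<lambda>i. \<sigma> ` P i) ` {1..m}) = \<sigma> ` (\<Union>i\<in>{1..m}. P i)" by auto
      also have "\<dots> = fst G" using cov bij by (simp add: bij_betw_def)
      finally show "\<Union> ((\<lambda>i. \<sigma> ` P i) ` {1..m}) = fst G" .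
    next
      fix i j y assume i: "i \<in> {1..m}" and j: "j \<in> {1..m}" and y: "y \<in> \<sigma> ` P j"
      then obtain y0 where y0: "y0 \<in> P j" "y = \<sigma> y0" by auto
      have "card (nbhd G (\<sigma> y0) \<inter> \<sigma> ` P i) = card (nbhd G y0 \<inter> P i)"
        using aut_card[OF sg s(1) _ Psub[OF i]] Psub[OF j] y0 by auto
      thus "card (nbhd G y \<inter> \<sigma> ` P i) = C i j" using base[OF i j y0(1)] y0 by simp
    qed
  qed
  thus ?thesis unfolding highly_regular_def by blast
qed




definition cadj :: "nat \<Rightarrow> nat \<Rightarrow> nat \<Rightarrow> bool" where
  "cadj N a b \<longleftrightarrow> b = Suc a mod N \<or> a = Suc b mod N"

definition Es :: "nat \<Rightarrow> nat \<Rightarrow> nat \<Rightarrow> nat \<Rightarrow> bool" where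
  "Es N q v w \<longleftrightarrow> v < N*q \<and> w < N*q \<and>
     ((v div N = w div N \<and> cadj N (v mod N) (w mod N)) \<or> (v mod N = w mod N \<and> v div N \<noteq> w div N))"

definition Gr :: "nat \<Rightarrow> nat \<Rightarrow> graph" where
  "Gr N q = ({..<N*q}, Es N q)"

lemma enc_mod: "a < N \<Longrightarrow> (a + N*l) mod N = (a::nat)" by simp
lemma enc_div: "a < N \<Longrightarrow> (a + N*l) div N = (l::nat)" by simp
lemma enc_less: "a < N \<Longrightarrow> l < q \<Longrightarrow> a + N*l < N*(q::nat)"
proof -
  assume "a < N" "l < q"
  hence "a + N*l < N + N*l" by simp
  also have "\<dots> = N * Suc l" by simp
  also have "\<dots> \<le> N*q" using \<open>l<q\<close> by (intro mult_le_mono2) simp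
  finally show ?thesis .
qed
lemma dm: "v = v mod N + N * (v div (N::nat))" by simp
lemma lt_iff: "0 < N \<Longrightarrow> v < N*q \<longleftrightarrow> v div N < (q::nat)"
  by (simp add: div_less_iff_less_mult mult.commute)

lemma sucmod: "a < N \<Longrightarrow> Suc a mod N = (if Suc a = N then 0 else Suc a)"
proof (cases "Suc a < N")
  case False
  assume "a < N"
  hence "Suc a = N" using False by simp
  thus ?thesis by simp
qed simp

lemma cadj_iff: "2 \<le> N \<Longrightarrow> a < N \<Longrightarrow> b < N \<Longrightarrow>
   cadj N a b \<longleftrightarrow> b = a+1 \<or> a = b+1 \<or> (a = N-1 \<and> b = 0) \<or> (b = N-1 \<and> a = 0)"
  unfolding cadj_def by (auto simp: sucmod)

lemma simple_Gr: "2 \<le> N \<Longrightarrow> 0 < q \<Longrightarrow> simple_graph (Gr N q)"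
  unfolding simple_graph_def Gr_def
proof (auto simp: Es_def cadj_def)
  assume "2 \<le> N" "0 < q" "{..<N * q} = {}"
  have "0 < N*q" using \<open>2 \<le> N\<close> \<open>0 < q\<close> by simp
  hence "0 \<in> {..<N*q}" by simp
  thus False using \<open>{..<N * q} = {}\<close> by blast
next
  fix x assume "2 \<le> N" "x mod N = Suc (x mod N) mod N"
  moreover have "x mod N < N" using \<open>2 \<le> N\<close> by simp
  ultimately show False by (simp add: sucmod split: if_splits)
qed




lemma pc_iff: "0 < N \<Longrightarrow> a < N \<Longrightarrow> c < N \<Longrightarrow> c = Suc a mod N \<longleftrightarrow> a = (c + N - 1) mod N"
proof (cases "c = 0")
  case True
  assume "0 < N" "a < N" "c < N"
  thus ?thesis using True by (auto simp: sucmod)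
next
  case False
  assume "0 < N" "a < N" "c < N"
  hence "(c + N - 1) mod N = c - 1" using False
    by (metis Nat.add_diff_assoc2 One_nat_def Suc_leI add.commute less_imp_diff_less mod_add_self2 mod_less not_gr0)
  thus ?thesis using False \<open>a < N\<close> \<open>c<N\<close> by (auto simp: sucmod)
qed

lemma nbhd_Gr:
  assumes N: "3 \<le> N" and q: "0 < q" and v: "v < N*q"
  shows "nbhd (Gr N q) v = {Suc (v mod N) mod N + N*(v div N), (v mod N + N - 1) mod N + N*(v div N)}
           \<union> (\<lambda>z. v mod N + N*z) ` ({..<q} - {v div N})" (is "_ = ?A \<union> ?B")
proof (rule set_eqI)
  fix w
  define c where "c = v mod N"
  define l where "l = v div N"
  define a where "a = w mod N"
  define l' where "l' = w div N"
  have N0: "0 < N" using N by simp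
  have c: "c < N" and a: "a < N" using N0 by (simp_all add: c_def a_def)
  have l: "l < q" using v lt_iff[OF N0] l_def by simp
  have w: "w = a + N*l'" by (simp add: a_def l'_def)
  have vv: "v = c + N*l" by (simp add: c_def l_def)
  have "w \<in> nbhd (Gr N q) v \<longleftrightarrow> w < N*q \<and> Es N q v w" by (simp add: nbhd_def Gr_def)
  also have "\<dots> \<longleftrightarrow> l' < q \<and> ((l = l' \<and> cadj N c a) \<or> (c = a \<and> l \<noteq> l'))"
    using v lt_iff[OF N0, of w q] unfolding Es_def c_def l_def a_def l'_def by auto
  also have "\<dots> \<longleftrightarrow> w \<in> ?A \<union> ?B"
  proof
    assume h: "l' < q \<and> ((l = l' \<and> cadj N c a) \<or> (c = a \<and> l \<noteq> l'))"
    show "w \<in> ?A \<union> ?B"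
    proof (cases "l = l' \<and> cadj N c a")
      case True
      hence "a = Suc c mod N \<or> a = (c + N - 1) mod N" using pc_iff[OF N0 a c] by (auto simp: cadj_def)
      thus ?thesis using True w unfolding c_def[symmetric] l_def[symmetric] by auto
    next
      case False
      hence "c = a" "l \<noteq> l'" "l' < q" using h by auto
      thus ?thesis using w unfolding c_def[symmetric] l_def[symmetric] by auto
    qed
  next
    assume h: "w \<in> ?A \<union> ?B"
    show "l' < q \<and> ((l = l' \<and> cadj N c a) \<or> (c = a \<and> l \<noteq> l'))"
    proof (cases "w \<in> ?B")
      case True
      then obtain z where z: "z < q" "z \<noteq> l" "w = c + N*z" unfolding c_def l_def by auto
      hence "a = c" "l' = z" using c by (simp_all add: a_def l'_def)
      thus ?thesis using z by simp
    next
      case False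
      hence "w = Suc c mod N + N*l \<or> w = (c + N - 1) mod N + N*l" using h unfolding c_def l_def by auto
      moreover have "Suc c mod N < N" "(c + N - 1) mod N < N" using N0 by simp_all
      ultimately have "l' = l" "a = Suc c mod N \<or> a = (c + N - 1) mod N"
        by (auto simp: a_def l'_def)
      moreover have "c = Suc a mod N \<longleftrightarrow> a = (c + N - 1) mod N" using pc_iff[OF N0 a c] .
      ultimately show ?thesis using l by (auto simp: cadj_def)
    qed
  qed
  finally show "w \<in> nbhd (Gr N q) v \<longleftrightarrow> w \<in> ?A \<union> ?B" .
qed

lemma card_nbhd_Gr:
  assumes N: "3 \<le> N" and q: "0 < q" and v: "v < N*q"
  shows "card (nbhd (Gr N q) v) = Suc q"
proof -
  define c where "c = v mod N"
  define l where "l = v div N"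
  have N0: "0 < N" using N by simp
  have c: "c < N" using N0 by (simp add: c_def)
  have l: "l < q" using v lt_iff[OF N0] l_def by simp
  have ne: "Suc c mod N \<noteq> (c + N - 1) mod N"
  proof
    assume "Suc c mod N = (c + N - 1) mod N"
    hence "c = Suc (Suc c mod N) mod N" using pc_iff[OF N0 _ c, of "Suc c mod N"] N0 by simp
    thus False using N c by (auto simp: sucmod split: if_splits)
  qed
  have A: "card {Suc c mod N + N*l, (c + N - 1) mod N + N*l} = 2"
    using ne by simp
  have inj: "inj_on (\<lambda>z. c + N*z) ({..<q} - {l})" using N0 by (auto simp: inj_on_def)
  have B: "card ((\<lambda>z. c + N*z) ` ({..<q} - {l})) = q - 1"
    using card_image[OF inj] l by simp
  have d1: "Suc c mod N \<noteq> c" using N c by (auto simp: sucmod)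
  have d2: "(c + N - 1) mod N \<noteq> c"
  proof
    assume "(c + N - 1) mod N = c"
    hence "c = Suc c mod N" using pc_iff[OF N0 c c] by simp
    thus False using d1 by simp
  qed
  have disj: "{Suc c mod N + N*l, (c + N - 1) mod N + N*l} \<inter> (\<lambda>z. c + N*z) ` ({..<q} - {l}) = {}"
  proof (rule ccontr)
    assume "\<not> ?thesis"
    then obtain z where "Suc c mod N + N*l = c + N*z \<or> (c + N - 1) mod N + N*l = c + N*z" by auto
    hence "(Suc c mod N + N*l) mod N = (c + N*z) mod N \<or> ((c + N - 1) mod N + N*l) mod N = (c + N*z) mod N"
      by metis
    thus False using d1 d2 c by simp
  qed
  have "card (nbhd (Gr N q) v) = 2 + (q - 1)"
    unfolding nbhd_Gr[OF N q v] c_def[symmetric] l_def[symmetric]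
    using card_Un_disjoint[OF _ _ disj] A B by simp
  thus ?thesis using q by simp
qed




lemma walk:
  assumes N0: "0 < N" and c: "c < N" and l: "l < q"
  shows "(Es N q)\<^sup>*\<^sup>* (c + N*l) ((c+j) mod N + N*l)"
proof (induction j)
  case 0 thus ?case using c by simp
next
  case (Suc j)
  let ?a = "(c+j) mod N"
  have a: "?a < N" using N0 by simp
  have "Es N q (?a + N*l) (Suc ?a mod N + N*l)"
    unfolding Es_def using a l N0 by (simp add: enc_less cadj_def)
  moreover have "Suc ?a mod N = (c + Suc j) mod N" by (simp add: mod_Suc_eq)
  ultimately show ?case using Suc by (metis rtranclp.rtrancl_into_rtrancl)
qed

lemma conn_Gr:
  assumes N0: "0 < N" and u: "u < N*q" and v: "v < N*q"
  shows "(Es N q)\<^sup>*\<^sup>* u v"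
proof -
  have lu: "u div N < q" and lv: "v div N < q" using u v lt_iff[OF N0] by auto
  have cu: "u mod N < N" and cv: "v mod N < N" using N0 by auto
  have "(Es N q)\<^sup>*\<^sup>* (u mod N + N*(u div N)) ((u mod N + (v mod N + N - u mod N)) mod N + N*(u div N))"
    by (rule walk[OF N0 cu lu])
  moreover have "u mod N + (v mod N + N - u mod N) = v mod N + N" using cu by simp
  hence "(u mod N + (v mod N + N - u mod N)) mod N = v mod N" by simp
  ultimately have 1: "(Es N q)\<^sup>*\<^sup>* u (v mod N + N*(u div N))" by simp
  show ?thesis
  proof (cases "u div N = v div N")
    case True thus ?thesis using 1 by simp
  next
    case False
    have "Es N q (v mod N + N*(u div N)) (v mod N + N*(v div N))"
      unfolding Es_def using False cv lu lv v by (simp add: enc_less)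
    thus ?thesis using 1 by (metis dm rtranclp.rtrancl_into_rtrancl)
  qed
qed

lemma connected_Gr: "0 < N \<Longrightarrow> graph_connected (Gr N q)"
  unfolding graph_connected_def Gr_def by (auto intro: conn_Gr)

lemma gdist1:
  assumes sg: "simple_graph G" and e: "snd G u z"
  shows "gdist G u z = 1"
proof -
  have "u \<noteq> z" using sg e by (cases G) (auto simp: simple_graph_def)
  show ?thesis unfolding gdist_def
  proof (rule Least_equality)
    show "(snd G ^^ 1) u z" using e by (simp only: relpowp_1)
    fix n assume "(snd G ^^ n) u z"
    thus "1 \<le> n" using \<open>u \<noteq> z\<close> by (cases n) auto
  qed
qed

lemma gdist1_imp:
  assumes c: "graph_connected G" and u: "u \<in> fst G" and z: "z \<in> fst G" and g: "gdist G u z = 1"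
  shows "snd G u z"
proof -
  have "(snd G)\<^sup>*\<^sup>* u z" using c u z by (auto simp: graph_connected_def)
  then obtain n where "(snd G ^^ n) u z" using rtranclp_imp_relpowp by metis
  hence "(snd G ^^ gdist G u z) u z" unfolding gdist_def by (rule LeastI)
  thus ?thesis using g relpowp_1 by metis
qed

lemma Dset1:
  assumes sg: "simple_graph G" and c: "graph_connected G" and u: "u \<in> fst G"
  shows "Dset G 1 u = nbhd G u"
  using gdist1[OF sg] gdist1_imp[OF c u] unfolding Dset_def nbhd_def by auto

lemma gdist2:
  assumes sg: "simple_graph G" and ne: "u \<noteq> z" and ne2: "\<not> snd G u z"
    and e1: "snd G u w" and e2: "snd G w z"
  shows "gdist G u z = 2"
  unfolding gdist_def
proof (rule Least_equality)
  show "(snd G ^^ 2) u z" using e1 e2 by (auto simp: numeral_2_eq_2 intro: relpowp_Suc_I2)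
  fix n assume h: "(snd G ^^ n) u z"
  show "2 \<le> n"
  proof (rule ccontr)
    assume "\<not> 2 \<le> n"
    hence "n = 0 \<or> n = 1" by auto
    thus False using h ne ne2 by auto
  qed
qed




lemma notDR:
  assumes N: "5 \<le> N" and q: "2 \<le> q"
  shows "\<not> distance_regular (Gr N q)"
proof
  assume dr: "distance_regular (Gr N q)"
  let ?G = "Gr N q"
  have N0: "0 < N" and N3: "3 \<le> N" and N2: "2 \<le> N" and q0: "0 < q" using N q by auto
  have sg: "simple_graph ?G" by (rule simple_Gr[OF N2 q0])
  have cn: "graph_connected ?G" by (rule connected_Gr[OF N0])
  have Nq: "N + N \<le> N*q" using q by (metis mult_2_right mult_le_mono2)
  have V: "0 < N*q" "2 < N*q" "1 < N*q" "1 + N < N*q" "N < N*q" using Nq N q by auto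
  have m1: "1 mod N = 1" "2 mod N = 2" "3 mod N = 3" "(1 + N) mod N = 1" using N by (auto simp: mod_Suc)
  have d1: "1 div N = 0" "2 div N = 0" "(1+N) div N = 1" using N enc_div[of 1 N 1] by auto
  have sm: "Suc 0 mod N = 1" "Suc 1 mod N = 2" "Suc 2 mod N = 3" "Suc 3 mod N = 4" using N by auto
  have e01: "Es N q 0 1" using V m1 d1 sm by (simp add: Es_def cadj_def)
  have e12: "Es N q 1 2" using V m1 d1 sm by (simp add: Es_def cadj_def)
  have e1x: "Es N q 1 (1+N)" using V m1 d1 sm by (simp add: Es_def cadj_def)
  have n02: "\<not> Es N q 0 2"
  proof
    assume "Es N q 0 2"
    hence "cadj N 0 2" using m1 d1 by (simp add: Es_def)
    thus False using N by (simp add: cadj_def sm)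
  qed
  have n0x: "\<not> Es N q 0 (1+N)" using m1 d1 by (simp add: Es_def)
  have g1: "gdist ?G 0 2 = 2" using gdist2[OF sg, of 0 2 1] e01 e12 n02 by (simp add: Gr_def)
  have g2: "gdist ?G 0 (1+N) = 2" using gdist2[OF sg, of 0 "1+N" 1] e01 e1x n0x by (simp add: Gr_def)
  have D1: "Dprev ?G 2 0 = nbhd ?G 0" using Dset1[OF sg cn, of 0] V by (simp add: Dprev_def Gr_def)
  have nb0: "nbhd ?G 0 = {1, N - 1} \<union> (\<lambda>z. N*z) ` ({..<q} - {0})"
  proof -
    have "(0 mod N + N - 1) mod N = N - 1" "Suc (0 mod N) mod N = 1" "0 div N = 0" "0 mod N = 0" using N by auto
    thus ?thesis using nbhd_Gr[OF N3 q0 V(1)] by (simp only: mult_0_right add_0_right add_0)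
  qed
  have pm: "(2 + N - 1) mod N = 1"
  proof -
    have "2 + N - 1 = 1 + N" by simp
    thus ?thesis using m1 by simp
  qed
  have nb2: "nbhd ?G 2 = {3, 1} \<union> (\<lambda>z. 2 + N*z) ` ({..<q} - {0})"
  proof -
    have "Suc 2 mod N = 3" using N by simp
    thus ?thesis using nbhd_Gr[OF N3 q0 V(2)] m1(2) d1(2) pm by (simp only: mult_0_right add_0_right)
  qed
  have nbx: "nbhd ?G (1+N) = {2 + N, N} \<union> (\<lambda>z. 1 + N*z) ` ({..<q} - {1})"
  proof -
    have "Suc 1 mod N = 2" "(1 + N - 1) mod N = 0" using N by simp_all
    thus ?thesis using nbhd_Gr[OF N3 q0 V(4)] m1(4) d1(3) by (simp only: mult_1_right add_0)
  qed
  have A0: "w = 1 \<or> w = N - 1 \<or> w mod N = 0" if "w \<in> nbhd ?G 0" for w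
  proof -
    have "w = 1 \<or> w = N - 1 \<or> w \<in> (\<lambda>z. N*z) ` ({..<q} - {0})" using that nb0 by blast
    thus ?thesis by auto
  qed
  have A2: "w = 3 \<or> w = 1 \<or> w mod N = 2" if "w \<in> nbhd ?G 2" for w
  proof -
    have "w = 3 \<or> w = 1 \<or> w \<in> (\<lambda>z. 2 + N*z) ` ({..<q} - {0})" using that nb2 by blast
    moreover have "(2 + N*z) mod N = 2" for z using N by (intro enc_mod) simp
    ultimately show ?thesis by blast
  qed
  have Ax: "w = 2 + N \<or> w = N \<or> w mod N = 1" if "w \<in> nbhd ?G (1+N)" for w
  proof -
    have "w = 2 + N \<or> w = N \<or> w \<in> (\<lambda>z. 1 + N*z) ` ({..<q} - {1})" using that nbx by blast
    moreover have "(1 + N*z) mod N = 1" for z using N by (intro enc_mod) simp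
    ultimately show ?thesis by blast
  qed
  have Nm: "(N - 1) mod N = N - 1" using N by simp
  have I1: "nbhd ?G 2 \<inter> nbhd ?G 0 = {1}"
  proof
    show "{1} \<subseteq> nbhd ?G 2 \<inter> nbhd ?G 0" unfolding nb0 nb2 by simp
    show "nbhd ?G 2 \<inter> nbhd ?G 0 \<subseteq> {1}"
    proof
      fix w assume w: "w \<in> nbhd ?G 2 \<inter> nbhd ?G 0"
      have a: "w = 3 \<or> w = 1 \<or> w mod N = 2" by (rule A2[OF IntD1[OF w]])
      have b: "w = 1 \<or> w = N - 1 \<or> w mod N = 0" by (rule A0[OF IntD2[OF w]])
      show "w \<in> {1}"
      proof (cases "w = 1")
        case False
        have "w = 3 \<Longrightarrow> w mod N = 3" using m1 by simp
        hence c1: "w mod N = 3 \<or> w mod N = 2" using a False by metis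
        have "w = N - 1 \<Longrightarrow> w mod N = N - 1" using Nm by simp
        hence c2: "w mod N = N - 1 \<or> w mod N = 0" using b False by metis
        have "False" using c1 c2 N by linarith
        thus ?thesis ..
      qed simp
    qed
  qed
  have I2: "nbhd ?G (1+N) \<inter> nbhd ?G 0 = {1, N}"
  proof
    show "{1, N} \<subseteq> nbhd ?G (1+N) \<inter> nbhd ?G 0"
    proof -
      have "1 \<in> (\<lambda>z. 1 + N*z) ` ({..<q} - {1})" using q0 by (auto intro: image_eqI[of _ _ 0])
      moreover have "N \<in> (\<lambda>z. N*z) ` ({..<q} - {0})" using q by (auto intro: image_eqI[of _ _ 1])
      ultimately show ?thesis unfolding nb0 nbx by simp
    qed
    show "nbhd ?G (1+N) \<inter> nbhd ?G 0 \<subseteq> {1, N}"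
    proof
      fix w assume w: "w \<in> nbhd ?G (1+N) \<inter> nbhd ?G 0"
      have b: "w = 1 \<or> w = N - 1 \<or> w mod N = 0" by (rule A0[OF IntD2[OF w]])
      have a: "w = 2 + N \<or> w = N \<or> w mod N = 1" by (rule Ax[OF IntD1[OF w]])
      have m2: "(2 + N) mod N = 2" using N enc_mod[of 2 N 1] by simp
      show "w \<in> {1, N}"
      proof (cases "w = 1 \<or> w = N")
        case False
        have "w = 2 + N \<Longrightarrow> w mod N = 2" using m2 by simp
        hence c1: "w mod N = 2 \<or> w mod N = 1" using a False by metis
        have "w = N - 1 \<Longrightarrow> w mod N = N - 1" using Nm by simp
        hence c2: "w mod N = N - 1 \<or> w mod N = 0" using b False by metis
        have False using c1 c2 N by linarith
        thus ?thesis ..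
      qed auto
    qed
  qed
  have "card (nbhd ?G 2 \<inter> Dprev ?G (gdist ?G 0 2) 0) = card (nbhd ?G (1+N) \<inter> Dprev ?G (gdist ?G 0 2) 0)"
    using dr V g1 g2 unfolding distance_regular_def Let_def Gr_def
    by (smt (verit, best) fst_conv lessThan_iff)
  hence "card (nbhd ?G 2 \<inter> nbhd ?G 0) = card (nbhd ?G (1+N) \<inter> nbhd ?G 0)" unfolding g1 D1 .
  hence "card {1::nat} = card {1, N}" unfolding I1 I2 .
  thus False using N by simp
qed




lemma coord_aut:
  assumes N0: "0 < N" and Fr: "\<forall>a<N. F a < N" and Fi: "inj_on F {..<N}"
    and Fc: "\<forall>a<N. \<forall>b<N. cadj N (F a) (F b) \<longleftrightarrow> cadj N a b"
    and Lr: "\<forall>x<q. L x < q" and Li: "inj_on L {..<q}"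
  shows "aut (Gr N q) (\<lambda>v. F (v mod N) + N * L (v div N))"
proof -
  define h where "h v = F (v mod N) + N * L (v div N)" for v
  have hm: "h v mod N = F (v mod N)" for v using Fr N0 unfolding h_def by simp
  have hd: "h v div N = L (v div N)" for v using Fr N0 unfolding h_def by simp
  have hl: "h v < N*q" if "v < N*q" for v
  proof -
    have "v div N < q" using that lt_iff[OF N0] by simp
    thus ?thesis unfolding h_def using Fr Lr N0 by (simp add: enc_less)
  qed
  have Feq: "F a = F b \<longleftrightarrow> a = b" if "a < N" "b < N" for a b
    using Fi that by (auto simp: inj_on_def)
  have Leq: "L a = L b \<longleftrightarrow> a = b" if "a < q" "b < q" for a b
    using Li that by (auto simp: inj_on_def)
  have inj: "inj_on h {..<N*q}"
  proof (rule inj_onI)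
    fix v w assume v: "v \<in> {..<N*q}" and w: "w \<in> {..<N*q}" and e: "h v = h w"
    have "v div N < q" "w div N < q" using v w lt_iff[OF N0] by auto
    moreover have "v mod N < N" "w mod N < N" using N0 by auto
    moreover have "F (v mod N) = F (w mod N)" "L (v div N) = L (w div N)"
      using e hm hd by metis+
    ultimately have "v mod N = w mod N" "v div N = w div N" using Feq Leq by auto
    thus "v = w" by (metis dm)
  qed
  have bij: "bij_betw h {..<N*q} {..<N*q}"
    unfolding bij_betw_def using inj endo_inj_surj[OF _ _ inj] hl by auto
  have edge: "Es N q v w \<longleftrightarrow> Es N q (h v) (h w)" if v: "v < N*q" and w: "w < N*q" for v w
  proof -
    have d: "v div N < q" "w div N < q" using v w lt_iff[OF N0] by auto
    have m: "v mod N < N" "w mod N < N" using N0 by auto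
    show ?thesis unfolding Es_def using hl[OF v] hl[OF w] v w hm hd Feq[OF m] Leq[OF d] Fc m
      by auto
  qed
  show ?thesis unfolding aut_def Gr_def h_def[symmetric] using bij edge by auto
qed

lemma trans_props:
  assumes N0: "0 < N"
  shows "\<forall>a<N. (a + c) mod N < N" "inj_on (\<lambda>a. (a + c) mod N) {..<N}"
    "\<forall>a<N. \<forall>b<N. cadj N ((a + c) mod N) ((b + c) mod N) \<longleftrightarrow> cadj N a b"
proof -
  show "\<forall>a<N. (a + c) mod N < N" using N0 by simp
  have canc: "(a + c) mod N = (b + c) mod N \<longleftrightarrow> a mod N = b mod N" for a b
    using cong_add_rcancel_nat[of a c b N] by (simp add: cong_def)
  show "inj_on (\<lambda>a. (a + c) mod N) {..<N}"
    by (rule inj_onI) (simp add: canc)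
  show "\<forall>a<N. \<forall>b<N. cadj N ((a + c) mod N) ((b + c) mod N) \<longleftrightarrow> cadj N a b"
  proof (intro allI impI)
    fix a b assume a: "a < N" and b: "b < N"
    have 1: "Suc ((a + c) mod N) mod N = (Suc a + c) mod N" by (simp add: mod_Suc_eq)
    have 2: "Suc ((b + c) mod N) mod N = (Suc b + c) mod N" by (simp add: mod_Suc_eq)
    have "(b + c) mod N = (Suc a + c) mod N \<longleftrightarrow> b = Suc a mod N"
      using canc[of b "Suc a"] b by simp
    moreover have "(a + c) mod N = (Suc b + c) mod N \<longleftrightarrow> a = Suc b mod N"
      using canc[of a "Suc b"] a by simp
    ultimately show "cadj N ((a + c) mod N) ((b + c) mod N) \<longleftrightarrow> cadj N a b"
      unfolding cadj_def 1 2 by simp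
  qed
qed

lemma refl_props:
  assumes N: "2 \<le> N"
  shows "\<forall>a<N. (N - a) mod N < N" "inj_on (\<lambda>a. (N - a) mod N) {..<N}"
    "\<forall>a<N. \<forall>b<N. cadj N ((N - a) mod N) ((N - b) mod N) \<longleftrightarrow> cadj N a b"
proof -
  have r: "(N - a) mod N = (if a = 0 then 0 else N - a)" if "a < N" for a
    using that by auto
  show "\<forall>a<N. (N - a) mod N < N" using N by simp
  show "inj_on (\<lambda>a. (N - a) mod N) {..<N}"
    by (rule inj_onI) (auto simp: r split: if_splits)
  show "\<forall>a<N. \<forall>b<N. cadj N ((N - a) mod N) ((N - b) mod N) \<longleftrightarrow> cadj N a b"
  proof (intro allI impI)
    fix a b assume a: "a < N" and b: "b < N"
    show "cadj N ((N - a) mod N) ((N - b) mod N) \<longleftrightarrow> cadj N a b"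
      using a b N by (cases "a = 0"; cases "b = 0") (auto simp: r cadj_iff)
  qed
qed

definition sw :: "nat \<Rightarrow> nat \<Rightarrow> nat \<Rightarrow> nat" where
  "sw a b x = (if x = a then b else if x = b then a else x)"

lemma sw_props:
  assumes "a < q" "b < q"
  shows "\<forall>x<q. sw a b x < q" "inj_on (sw a b) {..<q}"
  using assms by (auto simp: sw_def inj_on_def)



definition cd :: "nat \<Rightarrow> nat \<Rightarrow> nat" where "cd N a = min a (N - a)"

lemma cd_le: "cd N a \<le> N div 2" unfolding cd_def by linarith
lemma cd0: "a < N \<Longrightarrow> cd N a = 0 \<longleftrightarrow> a = 0" unfolding cd_def by auto
lemma cd_self: "t \<le> N div 2 \<Longrightarrow> cd N t = t" unfolding cd_def by linarith
lemma cd_refl: "a < N \<Longrightarrow> cd N ((N - a) mod N) = cd N a"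
  unfolding cd_def by (cases "a = 0") auto
lemma cd_eq: "a < N \<Longrightarrow> b < N \<Longrightarrow> cd N a = cd N b \<Longrightarrow> b = a \<or> b = (N - a) mod N"
  unfolding cd_def by (cases "a = 0") (auto split: if_splits)



definition P0 :: "nat \<Rightarrow> nat \<Rightarrow> nat \<Rightarrow> nat set" where
  "P0 N q i = {v \<in> {..<N*q}. cd N (v mod N) = (i - 1) div 2 \<and> (v div N = 0 \<longleftrightarrow> even (i - 1))}"

lemma hr_Gr:
  assumes N: "3 \<le> N" and q: "2 \<le> q"
  shows "highly_regular (Gr N q)"
proof -
  have N0: "0 < N" and N2: "2 \<le> N" and q0: "0 < q" using N q by auto
  define m where "m = 2 * (N div 2) + 2"
  have Nq: "N + N \<le> N*q" using q by (metis mult_2_right mult_le_mono2)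
  show ?thesis
  proof (rule hr_aut[where m = m and uz = 0 and P = "P0 N q"])
    show "simple_graph (Gr N q)" by (rule simple_Gr[OF N2 q0])
    show "2 \<le> m" unfolding m_def by simp
    show "m < card (fst (Gr N q))" unfolding m_def Gr_def using Nq N by simp
    show "0 \<in> fst (Gr N q)" unfolding Gr_def using N0 q0 by simp
    show "P0 N q 1 = {0}"
    proof
      show "P0 N q 1 \<subseteq> {0}"
      proof
        fix v assume "v \<in> P0 N q 1"
        hence "cd N (v mod N) = 0" "v div N = 0" unfolding P0_def by auto
        hence "v mod N = 0" "v div N = 0" using cd0[of "v mod N" N] N0 by auto
        thus "v \<in> {0}" by (metis dm add_0 mult_0_right singletonI)
      qed
      show "{0} \<subseteq> P0 N q 1" unfolding P0_def cd_def using N0 q0 by simp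
    qed
    show "\<forall>i\<in>{1..m}. P0 N q i \<noteq> {}"
    proof
      fix i assume i: "i \<in> {1..m}"
      define t where "t = (i - 1) div 2"
      have t: "t \<le> N div 2" using i unfolding t_def m_def by auto
      hence tN: "t < N" using N by linarith
      define w where "w = t + N * (if even (i - 1) then 0 else 1)"
      have "w \<in> P0 N q i"
        unfolding P0_def w_def using tN cd_self[OF t] q t_def by (auto simp: enc_less)
      thus "P0 N q i \<noteq> {}" by auto
    qed
    show "\<forall>i\<in>{1..m}. \<forall>j\<in>{1..m}. i \<noteq> j \<longrightarrow> P0 N q i \<inter> P0 N q j = {}"
    proof (intro ballI impI)
      fix i j assume i: "i \<in> {1..m}" and j: "j \<in> {1..m}" and ij: "i \<noteq> j"
      show "P0 N q i \<inter> P0 N q j = {}"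
      proof (rule ccontr)
        assume "P0 N q i \<inter> P0 N q j \<noteq> {}"
        then obtain v where "v \<in> P0 N q i" "v \<in> P0 N q j" by blast
        hence "(i - 1) div 2 = (j - 1) div 2" "even (i - 1) \<longleftrightarrow> even (j - 1)" unfolding P0_def by auto
        hence "i - 1 = j - 1" by presburger
        thus False using i j ij by auto
      qed
    qed
    show "(\<Union>i\<in>{1..m}. P0 N q i) = fst (Gr N q)"
    proof
      show "(\<Union>i\<in>{1..m}. P0 N q i) \<subseteq> fst (Gr N q)" unfolding P0_def Gr_def by auto
      show "fst (Gr N q) \<subseteq> (\<Union>i\<in>{1..m}. P0 N q i)"
      proof
        fix v assume v: "v \<in> fst (Gr N q)"
        define i where "i = 2 * cd N (v mod N) + (if v div N = 0 then 1 else 2)"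
        have "i \<in> {1..m}" unfolding i_def m_def using cd_le[of N "v mod N"] by auto
        moreover have "v \<in> P0 N q i" unfolding P0_def i_def using v by (auto simp: Gr_def)
        ultimately show "v \<in> (\<Union>i\<in>{1..m}. P0 N q i)" by blast
      qed
    qed
    show "\<forall>j\<in>{1..m}. \<forall>y\<in>P0 N q j. \<forall>y'\<in>P0 N q j. \<exists>h. aut (Gr N q) h \<and>
       (\<forall>i\<in>{1..m}. \<forall>v\<in>fst (Gr N q). h v \<in> P0 N q i \<longleftrightarrow> v \<in> P0 N q i) \<and> h y = y'"
    proof (intro ballI)
      fix j y y' assume j: "j \<in> {1..m}" and y: "y \<in> P0 N q j" and y': "y' \<in> P0 N q j"
      have yl: "y < N*q" "y' < N*q" using y y' by (auto simp: P0_def)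
      have cdy: "cd N (y mod N) = cd N (y' mod N)" and zy: "y div N = 0 \<longleftrightarrow> y' div N = 0"
        using y y' by (auto simp: P0_def)
      have ym: "y mod N < N" "y' mod N < N" using N0 by auto
      have yd: "y div N < q" "y' div N < q" using yl lt_iff[OF N0] by auto
      define F where "F a = (if y' mod N = y mod N then a else (N - a) mod N)" for a
      define L where "L = sw (y div N) (y' div N)"
      have Fpc: "(\<forall>a<N. F a < N) \<and> inj_on F {..<N} \<and> (\<forall>a<N. \<forall>b<N. cadj N (F a) (F b) \<longleftrightarrow> cadj N a b)"
      proof (cases "y' mod N = y mod N")
        case True
        hence "F = (\<lambda>a. a)" unfolding F_def by (simp add: fun_eq_iff)
        thus ?thesis by simp
      next
        case False
        hence "F = (\<lambda>a. (N - a) mod N)" unfolding F_def by (simp add: fun_eq_iff)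
        thus ?thesis using refl_props[OF N2] by simp
      qed
      have Fp: "\<forall>a<N. F a < N" "inj_on F {..<N}" "\<forall>a<N. \<forall>b<N. cadj N (F a) (F b) \<longleftrightarrow> cadj N a b"
        using Fpc by blast+
      have Lp: "\<forall>x<q. L x < q" "inj_on L {..<q}" unfolding L_def using sw_props[OF yd] by auto
      have Fcd: "cd N (F a) = cd N a" if "a < N" for a unfolding F_def using cd_refl[OF that] by simp
      have Fy: "F (y mod N) = y' mod N"
        using cd_eq[OF ym cdy] unfolding F_def by auto
      have Lz: "L x = 0 \<longleftrightarrow> x = 0" for x unfolding L_def sw_def using zy by auto
      define h where "h v = F (v mod N) + N * L (v div N)" for v
      have hm: "h v mod N = F (v mod N)" for v using Fp N0 unfolding h_def by simp
      have hd: "h v div N = L (v div N)" for v using Fp N0 unfolding h_def by simp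
      have hl: "h v < N*q" if "v < N*q" for v
      proof -
        have "v div N < q" using that lt_iff[OF N0] by simp
        thus ?thesis unfolding h_def using Fp Lp N0 by (simp add: enc_less)
      qed
      show "\<exists>h. aut (Gr N q) h \<and>
       (\<forall>i\<in>{1..m}. \<forall>v\<in>fst (Gr N q). h v \<in> P0 N q i \<longleftrightarrow> v \<in> P0 N q i) \<and> h y = y'"
      proof (intro exI conjI ballI)
        show "aut (Gr N q) h" unfolding h_def by (rule coord_aut[OF N0 Fp Lp])
        fix i v assume "i \<in> {1..m}" and v: "v \<in> fst (Gr N q)"
        have vl: "v < N*q" using v by (simp add: Gr_def)
        show "h v \<in> P0 N q i \<longleftrightarrow> v \<in> P0 N q i"
          unfolding P0_def using hl[OF vl] vl hm hd Fcd[of "v mod N"] N0 Lz by simp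
      next
        have "h y = y' mod N + N * (y' div N)" unfolding h_def Fy L_def sw_def by simp
        thus "h y = y'" by simp
      qed
    qed
    show "\<forall>u\<in>fst (Gr N q). \<exists>\<sigma>. aut (Gr N q) \<sigma> \<and> \<sigma> 0 = u"
    proof
      fix u assume u: "u \<in> fst (Gr N q)"
      hence ul: "u div N < q" using lt_iff[OF N0] by (simp add: Gr_def)
      have l0: "0 < q" using q0 .
      define F where "F a = (a + u mod N) mod N" for a
      define L where "L = sw 0 (u div N)"
      have Fp: "\<forall>a<N. F a < N" "inj_on F {..<N}" "\<forall>a<N. \<forall>b<N. cadj N (F a) (F b) \<longleftrightarrow> cadj N a b"
        using trans_props[OF N0, of "u mod N"] unfolding F_def by auto
      have Lp: "\<forall>x<q. L x < q" "inj_on L {..<q}" unfolding L_def using sw_props[OF l0 ul] by auto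
      show "\<exists>\<sigma>. aut (Gr N q) \<sigma> \<and> \<sigma> 0 = u"
      proof (intro exI conjI)
        show "aut (Gr N q) (\<lambda>v. F (v mod N) + N * L (v div N))" by (rule coord_aut[OF N0 Fp Lp])
        show "F (0 mod N) + N * L (0 div N) = u" unfolding F_def L_def sw_def by simp
      qed
    qed
  qed
qed




theorem theoremA4:
  fixes k :: nat
  assumes "k \<ge> 3"
  shows "\<exists>S :: graph set. infinite S \<and>
    (\<forall>G \<in> S. simple_graph G \<and> graph_connected G \<and> k_regular k G \<and>
              highly_regular G \<and> \<not> distance_regular G) \<and>
    (\<forall>G \<in> S. \<forall>H \<in> S. G \<noteq> H \<longrightarrow> \<not> graph_iso G H)"
proof -
  define q where "q = k - 1"
  have q: "2 \<le> q" "0 < q" and kq: "k = Suc q" using assms unfolding q_def by auto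
  define S where "S = (\<lambda>N. Gr N q) ` {5..}"
  have cardG: "card (fst (Gr N q)) = N * q" for N by (simp add: Gr_def)
  have injG: "inj_on (\<lambda>N. Gr N q) {5..}"
  proof (rule inj_onI)
    fix N N' assume "Gr N q = Gr N' q"
    hence "N * q = N' * q" using cardG by metis
    thus "N = N'" using q by simp
  qed
  have "infinite S" unfolding S_def
    using finite_imageD[OF _ injG] infinite_Ici by blast
  moreover have "\<forall>G \<in> S. simple_graph G \<and> graph_connected G \<and> k_regular k G \<and>
              highly_regular G \<and> \<not> distance_regular G"
  proof
    fix G assume "G \<in> S"
    then obtain N where N: "5 \<le> N" and G: "G = Gr N q" unfolding S_def by auto
    have "simple_graph G" using simple_Gr[of N q] N q G by simp
    moreover have "graph_connected G" using connected_Gr[of N q] N G by simp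
    moreover have "k_regular k G" unfolding k_regular_def G kq
      using card_nbhd_Gr[of N q] N q by (simp add: Gr_def)
    moreover have "highly_regular G" using hr_Gr[of N q] N q G by simp
    moreover have "\<not> distance_regular G" using notDR[of N q] N q G by simp
    ultimately show "simple_graph G \<and> graph_connected G \<and> k_regular k G \<and>
              highly_regular G \<and> \<not> distance_regular G" by blast
  qed
  moreover have "\<forall>G \<in> S. \<forall>H \<in> S. G \<noteq> H \<longrightarrow> \<not> graph_iso G H"
  proof (intro ballI impI notI)
    fix G H assume "G \<in> S" "H \<in> S" "G \<noteq> H" "graph_iso G H"
    then obtain N N' where G: "G = Gr N q" and H: "H = Gr N' q" unfolding S_def by auto
    obtain f where "bij_betw f (fst G) (fst H)" using \<open>graph_iso G H\<close> by (auto simp: graph_iso_def)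
    hence "card (fst G) = card (fst H)" by (rule bij_betw_same_card)
    hence "N * q = N' * q" using cardG G H by simp
    hence "N = N'" using q by simp
    thus False using G H \<open>G \<noteq> H\<close> by simp
  qed
  ultimately show ?thesis by blast
qed


end
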